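(* If $(\Phi,\{\Phi_{f,x}\}_{x\in D},D)$ is a labeled compact information algebra, then its associated domain-free information algebra $(\Phi/\sigma,D)$ is a domain-free compact information algebra. Furthermore, if $(\Phi,\{\Phi_{f,x}\}_{x\in D},D)$ is a labeled s-compact information algebra, then $(\Phi/\sigma,D)$ is a domain-free s-compact information algebra.
   Context: A labeled information algebra $(\Phi,D)$ consists of a lattice $D$, a set $\Phi$ with labeling $d:\Phi\to D$, combination $\otimes$ and marginalization $\phi^{\downarrow x}$ for $x\le d(\phi)$, such that: $\otimes$ is associative and commutative; for each $s\in D$ there is $e_s$ with $d(e_s)=s$ and $e_s\otimes\phi=\phi$ whenever $d(\phi)=s$; $d(\phi\otimes\psi)=d(\phi)\vee d(\psi)$; $d(\phi^{\downarrow x})=x$; $(\phi^{\downarrow y})^{\downarrow x}=\phi^{\downarrow x}$ for $x\le y\le d(\phi)$; $(\phi\otimes\psi)^{\downarrow x}=\phi\otimes\psi^{\downarrow x\wedge y}$ when $d(\phi)=x$, $d(\psi)=y$; $e_y^{\downarrow x}=e_x$ for $x\le y$; $\phi\otimes\phi^{\downarrow x}=\phi$. In any (labeled or domain-free) information algebra, $\psi\le\phi$ iff $\psi\otimes\phi=\phi$; suprema refer to this order; $a\ll b$ means: for every directed $X$ with $b\le\vee X$ there is $c\in X$ with $a\le c$. $\Phi_x=\{\phi:d(\phi)=x\}$, $\ll_x$ is the way-below relation in $(\Phi_x,\le)$, and $\Phi_{f,x}=\{\psi\in\Phi_x:\psi\ll_x\psi\}$. A labeled compact (resp. s-compact) information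 algebra $(\Phi,\{\Gamma_x\}_{x\in D},D)$: $D$ has a top element $\top$, each $\Gamma_x\subseteq\Phi_x$ is closed under combination and contains $e_x$, and (convergency) every directed $X\subseteq\Gamma_x$ has a supremum $\vee X\in\Phi_x$; (density) $\phi=\vee\{\psi\in\Gamma_x:\psi\ll_x\phi\}$ for all $\phi\in\Phi_x$ (resp. (strong density) $\phi=\vee\{\psi^{\downarrow x}\in\Gamma_x:\ \psi\in\Phi,\ x\le d(\psi),\ \psi^{\downarrow x}\otimes e_\top\in\Gamma_\top,\ \psi^{\downarrow x}\ll_x\phi\}$ for all $\phi\in\Phi_x$); (compactness) for every directed $X\subseteq\Gamma_x$ and $\phi\in\Gamma_x$ with $\phi\le\vee X$ there is $\psi\in X$ with $\phi\le\psi$. In this case $\Gamma_x=\Phi_{f,x}$. The associated domain-free algebra: for $y\ge d(\phi)$ let $\phi^{\uparrow y}=\phi\otimes e_y$; $\phi\equiv\psi\pmod\sigma$ iff $\phi^{\uparrow d(\phi)\vee d(\psi)}=\psi^{\uparrow d(\phi)\vee d(\psi)}$; on $\Phi/\sigma$, $[\phi]_\sigma\otimes[\psi]_\sigma=[\phi\otimes\psi]_\sigma$ and $[\phi]_\sigma^{\Rightarrow x}=[(\phi^{\uparrow x\vee d(\phi)})^{\downarrow x}]_\sigma$. A domain-free information algebra $(\Phi',D)$ (combination associative, commutative, with neutral element $e$, focusing $\Rightarrow$ satisfying transitivity, combination, support and idempotency axioms), with $D$ having a top element, is compact (resp. s-compact) if there exists $\Gamma\subseteq\Phi'$, closed under combination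 and containing $e$, such that every directed subset of $\Gamma$ has a supremum in $\Phi'$; $\phi=\vee\{\psi\in\Gamma:\psi\ll\phi\}$ for all $\phi$ (resp. $\phi^{\Rightarrow x}=\vee\{\psi\in\Gamma:\psi=\psi^{\Rightarrow x}\ll\phi\}$ for all $\phi,x$); and for every directed $X\subseteq\Gamma$ and $\phi\in\Gamma$ with $\phi\le\vee X$ there is $\psi\in X$ with $\phi\le\psi$. *)

theory Defs
  imports Main
begin

definition directed_in :: "('b \<Rightarrow> 'b \<Rightarrow> bool) \<Rightarrow> 'b set \<Rightarrow> bool" where
  "directed_in le X \<longleftrightarrow> X \<noteq> {} \<and> (\<forall>a\<in>X. \<forall>b\<in>X. \<exists>c\<in>X. le a c \<and> le b c)"

definition is_lub_in :: "'b set \<Rightarrow> ('b \<Rightarrow> 'b \<Rightarrow> bool) \<Rightarrow> 'b set \<Rightarrow> 'b \<Rightarrow> bool" where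
  "is_lub_in A le X s \<longleftrightarrow> s \<in> A \<and> (\<forall>x\<in>X. le x s) \<and> (\<forall>u\<in>A. (\<forall>x\<in>X. le x u) \<longrightarrow> le s u)"

definition way_below_in :: "'b set \<Rightarrow> ('b \<Rightarrow> 'b \<Rightarrow> bool) \<Rightarrow> 'b \<Rightarrow> 'b \<Rightarrow> bool" where
  "way_below_in A le a b \<longleftrightarrow>
     (\<forall>X. X \<subseteq> A \<longrightarrow> directed_in le X \<longrightarrow>
        (\<forall>s. is_lub_in A le X s \<longrightarrow> le b s \<longrightarrow> (\<exists>c\<in>X. le a c)))"

definition info_le :: "('b \<Rightarrow> 'b \<Rightarrow> 'b) \<Rightarrow> 'b \<Rightarrow> 'b \<Rightarrow> bool" where
  "info_le comb \<psi> \<phi> \<longleftrightarrow> comb \<psi> \<phi> = \<phi>"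

section \<open>Labeled information algebras (Phi is the whole type 'a, D the lattice type 'l)\<close>

definition labeled_ia ::
  "('a \<Rightarrow> 'l::lattice) \<Rightarrow> ('a \<Rightarrow> 'a \<Rightarrow> 'a) \<Rightarrow> ('a \<Rightarrow> 'l \<Rightarrow> 'a) \<Rightarrow> ('l \<Rightarrow> 'a) \<Rightarrow> bool" where
  "labeled_ia d comb marg e \<longleftrightarrow>
     (\<forall>a b c. comb (comb a b) c = comb a (comb b c)) \<and>
     (\<forall>a b. comb a b = comb b a) \<and>
     (\<forall>s. d (e s) = s) \<and>
     (\<forall>s \<phi>. d \<phi> = s \<longrightarrow> comb (e s) \<phi> = \<phi>) \<and>
     (\<forall>\<phi> \<psi>. d (comb \<phi> \<psi>) = sup (d \<phi>) (d \<psi>)) \<and>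
     (\<forall>\<phi> x. x \<le> d \<phi> \<longrightarrow> d (marg \<phi> x) = x) \<and>
     (\<forall>\<phi> x y. x \<le> y \<longrightarrow> y \<le> d \<phi> \<longrightarrow> marg (marg \<phi> y) x = marg \<phi> x) \<and>
     (\<forall>\<phi> \<psi> x y. d \<phi> = x \<longrightarrow> d \<psi> = y \<longrightarrow>
         marg (comb \<phi> \<psi>) x = comb \<phi> (marg \<psi> (inf x y))) \<and>
     (\<forall>x y. x \<le> y \<longrightarrow> marg (e y) x = e x) \<and>
     (\<forall>\<phi> x. x \<le> d \<phi> \<longrightarrow> comb \<phi> (marg \<phi> x) = \<phi>)"

definition Phi_at :: "('a \<Rightarrow> 'l) \<Rightarrow> 'l \<Rightarrow> 'a set" where
  "Phi_at d x = {\<phi>. d \<phi> = x}"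

definition Phi_f :: "('a \<Rightarrow> 'l) \<Rightarrow> ('a \<Rightarrow> 'a \<Rightarrow> 'a) \<Rightarrow> 'l \<Rightarrow> 'a set" where
  "Phi_f d comb x = {\<psi> \<in> Phi_at d x. way_below_in (Phi_at d x) (info_le comb) \<psi> \<psi>}"

definition labeled_compact_base ::
  "('a \<Rightarrow> 'l::bounded_lattice_top) \<Rightarrow> ('a \<Rightarrow> 'a \<Rightarrow> 'a) \<Rightarrow> ('a \<Rightarrow> 'l \<Rightarrow> 'a) \<Rightarrow> ('l \<Rightarrow> 'a)
     \<Rightarrow> ('l \<Rightarrow> 'a set) \<Rightarrow> bool" where
  "labeled_compact_base d comb marg e \<Gamma> \<longleftrightarrow>
     labeled_ia d comb marg e \<and>
     (\<forall>x. \<Gamma> x \<subseteq> Phi_at d x \<and> e x \<in> \<Gamma> x \<and>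
          (\<forall>\<phi>\<in>\<Gamma> x. \<forall>\<psi>\<in>\<Gamma> x. comb \<phi> \<psi> \<in> \<Gamma> x)) \<and>
     (\<forall>x X. X \<subseteq> \<Gamma> x \<longrightarrow> directed_in (info_le comb) X \<longrightarrow>
          (\<exists>s. is_lub_in (Phi_at d x) (info_le comb) X s)) \<and>
     (\<forall>x X \<phi>. X \<subseteq> \<Gamma> x \<longrightarrow> directed_in (info_le comb) X \<longrightarrow> \<phi> \<in> \<Gamma> x \<longrightarrow>
          (\<exists>s. is_lub_in (Phi_at d x) (info_le comb) X s \<and> info_le comb \<phi> s) \<longrightarrow>
          (\<exists>\<psi>\<in>X. info_le comb \<phi> \<psi>))"

definition labeled_compact ::
  "('a \<Rightarrow> 'l::bounded_lattice_top) \<Rightarrow> ('a \<Rightarrow> 'a \<Rightarrow> 'a) \<Rightarrow> ('a \<Rightarrow> 'l \<Rightarrow> 'a) \<Rightarrow> ('l \<Rightarrow> 'a)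
     \<Rightarrow> ('l \<Rightarrow> 'a set) \<Rightarrow> bool" where
  "labeled_compact d comb marg e \<Gamma> \<longleftrightarrow>
     labeled_compact_base d comb marg e \<Gamma> \<and>
     (\<forall>x. \<forall>\<phi>\<in>Phi_at d x. is_lub_in (Phi_at d x) (info_le comb)
          {\<psi>\<in>\<Gamma> x. way_below_in (Phi_at d x) (info_le comb) \<psi> \<phi>} \<phi>)"

definition labeled_scompact ::
  "('a \<Rightarrow> 'l::bounded_lattice_top) \<Rightarrow> ('a \<Rightarrow> 'a \<Rightarrow> 'a) \<Rightarrow> ('a \<Rightarrow> 'l \<Rightarrow> 'a) \<Rightarrow> ('l \<Rightarrow> 'a)
     \<Rightarrow> ('l \<Rightarrow> 'a set) \<Rightarrow> bool" where
  "labeled_scompact d comb marg e \<Gamma> \<longleftrightarrow>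
     labeled_compact_base d comb marg e \<Gamma> \<and>
     (\<forall>x. \<forall>\<phi>\<in>Phi_at d x. is_lub_in (Phi_at d x) (info_le comb)
          {marg \<psi> x | \<psi>. x \<le> d \<psi> \<and> marg \<psi> x \<in> \<Gamma> x \<and>
               comb (marg \<psi> x) (e top) \<in> \<Gamma> top \<and>
               way_below_in (Phi_at d x) (info_le comb) (marg \<psi> x) \<phi>} \<phi>)"

definition df_ia :: "'b set \<Rightarrow> ('b \<Rightarrow> 'b \<Rightarrow> 'b) \<Rightarrow> 'b \<Rightarrow> ('b \<Rightarrow> 'l::lattice \<Rightarrow> 'b) \<Rightarrow> bool" where
  "df_ia P comb e foc \<longleftrightarrow>
     (\<forall>a\<in>P. \<forall>b\<in>P. comb a b \<in> P) \<and> e \<in> P \<and> (\<forall>a\<in>P. \<forall>x. foc a x \<in> P) \<and>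
     (\<forall>a\<in>P. \<forall>b\<in>P. \<forall>c\<in>P. comb (comb a b) c = comb a (comb b c)) \<and>
     (\<forall>a\<in>P. \<forall>b\<in>P. comb a b = comb b a) \<and>
     (\<forall>a\<in>P. comb e a = a) \<and>
     (\<forall>\<phi>\<in>P. \<forall>x y. foc (foc \<phi> x) y = foc \<phi> (inf x y)) \<and>
     (\<forall>\<phi>\<in>P. \<forall>\<psi>\<in>P. \<forall>x. foc (comb (foc \<phi> x) \<psi>) x = comb (foc \<phi> x) (foc \<psi> x)) \<and>
     (\<forall>\<phi>\<in>P. \<exists>x. foc \<phi> x = \<phi>) \<and>
     (\<forall>\<phi>\<in>P. \<forall>x. comb \<phi> (foc \<phi> x) = \<phi>)"

definition df_compact_base ::
  "'b set \<Rightarrow> ('b \<Rightarrow> 'b \<Rightarrow> 'b) \<Rightarrow> 'b \<Rightarrow> ('b \<Rightarrow> 'l::lattice \<Rightarrow> 'b) \<Rightarrow> 'b set \<Rightarrow> bool" where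
  "df_compact_base P comb e foc \<Gamma> \<longleftrightarrow>
     \<Gamma> \<subseteq> P \<and> e \<in> \<Gamma> \<and> (\<forall>a\<in>\<Gamma>. \<forall>b\<in>\<Gamma>. comb a b \<in> \<Gamma>) \<and>
     (\<forall>X. X \<subseteq> \<Gamma> \<longrightarrow> directed_in (info_le comb) X \<longrightarrow> (\<exists>s. is_lub_in P (info_le comb) X s)) \<and>
     (\<forall>X \<phi>. X \<subseteq> \<Gamma> \<longrightarrow> directed_in (info_le comb) X \<longrightarrow> \<phi> \<in> \<Gamma> \<longrightarrow>
          (\<exists>s. is_lub_in P (info_le comb) X s \<and> info_le comb \<phi> s) \<longrightarrow>
          (\<exists>\<psi>\<in>X. info_le comb \<phi> \<psi>))"

text \<open>D has a top element: ensured by the class bounded_lattice_top.\<close>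
definition df_compact ::
  "'b set \<Rightarrow> ('b \<Rightarrow> 'b \<Rightarrow> 'b) \<Rightarrow> 'b \<Rightarrow> ('b \<Rightarrow> 'l::bounded_lattice_top \<Rightarrow> 'b) \<Rightarrow> bool" where
  "df_compact P comb e foc \<longleftrightarrow> df_ia P comb e foc \<and>
     (\<exists>\<Gamma>. df_compact_base P comb e foc \<Gamma> \<and>
        (\<forall>\<phi>\<in>P. is_lub_in P (info_le comb) {\<psi>\<in>\<Gamma>. way_below_in P (info_le comb) \<psi> \<phi>} \<phi>))"

definition df_scompact ::
  "'b set \<Rightarrow> ('b \<Rightarrow> 'b \<Rightarrow> 'b) \<Rightarrow> 'b \<Rightarrow> ('b \<Rightarrow> 'l::bounded_lattice_top \<Rightarrow> 'b) \<Rightarrow> bool" where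
  "df_scompact P comb e foc \<longleftrightarrow> df_ia P comb e foc \<and>
     (\<exists>\<Gamma>. df_compact_base P comb e foc \<Gamma> \<and>
        (\<forall>\<phi>\<in>P. \<forall>x. is_lub_in P (info_le comb)
            {\<psi>\<in>\<Gamma>. foc \<psi> x = \<psi> \<and> way_below_in P (info_le comb) \<psi> \<phi>} (foc \<phi> x)))"

definition vac_ext :: "('a \<Rightarrow> 'a \<Rightarrow> 'a) \<Rightarrow> ('l \<Rightarrow> 'a) \<Rightarrow> 'a \<Rightarrow> 'l \<Rightarrow> 'a" where
  "vac_ext comb e \<phi> y = comb \<phi> (e y)"

definition sigma_equiv :: "('a \<Rightarrow> 'l::lattice) \<Rightarrow> ('a \<Rightarrow> 'a \<Rightarrow> 'a) \<Rightarrow> ('l \<Rightarrow> 'a) \<Rightarrow> 'a \<Rightarrow> 'a \<Rightarrow> bool" where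
  "sigma_equiv d comb e \<phi> \<psi> \<longleftrightarrow>
     vac_ext comb e \<phi> (sup (d \<phi>) (d \<psi>)) = vac_ext comb e \<psi> (sup (d \<phi>) (d \<psi>))"

definition sigma_class :: "('a \<Rightarrow> 'l::lattice) \<Rightarrow> ('a \<Rightarrow> 'a \<Rightarrow> 'a) \<Rightarrow> ('l \<Rightarrow> 'a) \<Rightarrow> 'a \<Rightarrow> 'a set" where
  "sigma_class d comb e \<phi> = {\<psi>. sigma_equiv d comb e \<phi> \<psi>}"

definition quot_carrier :: "('a \<Rightarrow> 'l::lattice) \<Rightarrow> ('a \<Rightarrow> 'a \<Rightarrow> 'a) \<Rightarrow> ('l \<Rightarrow> 'a) \<Rightarrow> 'a set set" where
  "quot_carrier d comb e = range (sigma_class d comb e)"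

definition quot_comb :: "('a \<Rightarrow> 'l::lattice) \<Rightarrow> ('a \<Rightarrow> 'a \<Rightarrow> 'a) \<Rightarrow> ('l \<Rightarrow> 'a)
    \<Rightarrow> 'a set \<Rightarrow> 'a set \<Rightarrow> 'a set" where
  "quot_comb d comb e A B = sigma_class d comb e (comb (SOME \<phi>. \<phi> \<in> A) (SOME \<psi>. \<psi> \<in> B))"

definition quot_foc :: "('a \<Rightarrow> 'l::lattice) \<Rightarrow> ('a \<Rightarrow> 'a \<Rightarrow> 'a) \<Rightarrow> ('a \<Rightarrow> 'l \<Rightarrow> 'a) \<Rightarrow> ('l \<Rightarrow> 'a)
    \<Rightarrow> 'a set \<Rightarrow> 'l \<Rightarrow> 'a set" where
  "quot_foc d comb marg e A x =
     (let \<phi> = (SOME \<phi>. \<phi> \<in> A) in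
      sigma_class d comb e (marg (vac_ext comb e \<phi> (sup x (d \<phi>))) x))"

text \<open>Neutral element of Phi/sigma: the class of e_top (all e_s are sigma-equivalent).\<close>
definition quot_neutral :: "('a \<Rightarrow> 'l::bounded_lattice_top) \<Rightarrow> ('a \<Rightarrow> 'a \<Rightarrow> 'a) \<Rightarrow> ('l \<Rightarrow> 'a) \<Rightarrow> 'a set" where
  "quot_neutral d comb e = sigma_class d comb e (e top)"

end

theory Submission
  imports Defs
begin


lemma wbD: "way_below_in A le a b \<Longrightarrow> X \<subseteq> A \<Longrightarrow> directed_in le X \<Longrightarrow> is_lub_in A le X s
   \<Longrightarrow> le b s \<Longrightarrow> \<exists>c\<in>X. le a c"
  unfolding way_below_in_def by blast

locale oiso =
  fixes h :: "'b \<Rightarrow> 'c" and P :: "'b set" and T :: "'c set"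
    and le :: "'b \<Rightarrow> 'b \<Rightarrow> bool" and le' :: "'c \<Rightarrow> 'c \<Rightarrow> bool"
  assumes inj: "inj_on h P" and img: "h ` P = T"
    and ord: "\<And>a b. a \<in> P \<Longrightarrow> b \<in> P \<Longrightarrow> le a b \<longleftrightarrow> le' (h a) (h b)"
begin

lemma dir: assumes XP: "X \<subseteq> P" shows "directed_in le X \<longleftrightarrow> directed_in le' (h ` X)"
proof
  assume D: "directed_in le X"
  show "directed_in le' (h ` X)" unfolding directed_in_def
  proof (intro conjI ballI)
    show "h ` X \<noteq> {}" using D unfolding directed_in_def by blast
    fix a b assume "a \<in> h ` X" "b \<in> h ` X"
    then obtain a' b' where ab: "a' \<in> X" "b' \<in> X" "a = h a'" "b = h b'" by blast
    then obtain c where c: "c \<in> X" "le a' c" "le b' c" using D unfolding directed_in_def by blast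
    have P3: "a' \<in> P" "b' \<in> P" "c \<in> P" using ab c XP by auto
    have "le' a (h c) \<and> le' b (h c)" using ord[OF P3(1,3)] ord[OF P3(2,3)] c ab by simp
    then show "\<exists>c\<in>h ` X. le' a c \<and> le' b c" using c(1) by blast
  qed
next
  assume D: "directed_in le' (h ` X)"
  show "directed_in le X" unfolding directed_in_def
  proof (intro conjI ballI)
    show "X \<noteq> {}" using D unfolding directed_in_def by blast
    fix a b assume ab: "a \<in> X" "b \<in> X"
    then obtain c where c: "c \<in> h ` X" "le' (h a) c" "le' (h b) c" using D unfolding directed_in_def by blast
    then obtain c' where c': "c' \<in> X" "c = h c'" by blast
    have P3: "a \<in> P" "b \<in> P" "c' \<in> P" using ab c' XP by auto
    have "le a c' \<and> le b c'" using ord[OF P3(1,3)] ord[OF P3(2,3)] c c' by simp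
    then show "\<exists>c\<in>X. le a c \<and> le b c" using c'(1) by blast
  qed
qed

lemma lub: assumes XP: "X \<subseteq> P" and sP: "s \<in> P"
  shows "is_lub_in P le X s \<longleftrightarrow> is_lub_in T le' (h ` X) (h s)"
proof
  assume L: "is_lub_in P le X s"
  show "is_lub_in T le' (h ` X) (h s)" unfolding is_lub_in_def
  proof (intro conjI ballI impI)
    show "h s \<in> T" using sP img by blast
    fix x assume "x \<in> h ` X"
    then obtain x' where "x' \<in> X" "x = h x'" by blast
    then have "x' \<in> P" "le x' s" using L XP unfolding is_lub_in_def by auto
    then show "le' x (h s)" using ord[OF _ sP] \<open>x = h x'\<close> by simp
  next
    fix u assume u: "u \<in> T" and ub: "\<forall>x\<in>h ` X. le' x u"
    obtain u' where u': "u' \<in> P" "u = h u'" using u img by blast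
    have "\<forall>x\<in>X. le x u'" using ub ord XP u' by (auto simp: subset_iff)
    then have "le s u'" using L u' unfolding is_lub_in_def by blast
    then show "le' (h s) u" using ord[OF sP u'(1)] u'(2) by simp
  qed
next
  assume L: "is_lub_in T le' (h ` X) (h s)"
  show "is_lub_in P le X s" unfolding is_lub_in_def
  proof (intro conjI ballI impI)
    show "s \<in> P" by fact
    fix x assume "x \<in> X"
    then show "le x s" using L ord[OF _ sP] XP unfolding is_lub_in_def by (auto simp: subset_iff)
  next
    fix u assume u: "u \<in> P" and ub: "\<forall>x\<in>X. le x u"
    have "\<forall>x\<in>h ` X. le' x (h u)" using ub ord[OF _ u] XP by (auto simp: subset_iff)
    moreover have "h u \<in> T" using u img by blast
    ultimately have "le' (h s) (h u)" using L unfolding is_lub_in_def by blast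
    then show "le s u" using ord[OF sP u] by simp
  qed
qed

lemma lub_ex: "X \<subseteq> P \<Longrightarrow> (\<exists>s. is_lub_in P le X s) \<longleftrightarrow> (\<exists>s. is_lub_in T le' (h ` X) s)"
proof
  assume X: "X \<subseteq> P" and "\<exists>s. is_lub_in P le X s"
  then obtain s where s: "is_lub_in P le X s" by blast
  then have "s \<in> P" unfolding is_lub_in_def by blast
  then show "\<exists>s. is_lub_in T le' (h ` X) s" using lub[OF X] s by blast
next
  assume X: "X \<subseteq> P" and "\<exists>s. is_lub_in T le' (h ` X) s"
  then obtain s where s: "is_lub_in T le' (h ` X) s" by blast
  then have "s \<in> T" unfolding is_lub_in_def by blast
  then obtain s' where "s' \<in> P" "s = h s'" using img by blast
  then show "\<exists>s. is_lub_in P le X s" using lub[OF X] s by blast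
qed

lemma wb: assumes a: "a \<in> P" and b: "b \<in> P"
  shows "way_below_in P le a b \<longleftrightarrow> way_below_in T le' (h a) (h b)"
proof
  assume W: "way_below_in P le a b"
  show "way_below_in T le' (h a) (h b)"
    unfolding way_below_in_def
  proof (intro allI impI)
    fix Y s assume Y: "Y \<subseteq> T" and dY: "directed_in le' Y" and ls: "is_lub_in T le' Y s"
      and bs: "le' (h b) s"
    define X where "X = {x\<in>P. h x \<in> Y}"
    have XP: "X \<subseteq> P" unfolding X_def by blast
    have hX: "h ` X = Y"
    proof
      show "h ` X \<subseteq> Y" unfolding X_def by blast
      show "Y \<subseteq> h ` X"
      proof
        fix y assume "y \<in> Y"
        then have "y \<in> h ` P" using Y img by blast
        then obtain x where "x \<in> P" "y = h x" by blast
        then show "y \<in> h ` X" unfolding X_def using \<open>y \<in> Y\<close> by blast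
      qed
    qed
    have "directed_in le' (h ` X)" unfolding hX by (rule dY)
    then have dX: "directed_in le X" using dir[OF XP] by blast
    have "s \<in> T" using ls unfolding is_lub_in_def by blast
    then obtain s' where s': "s' \<in> P" "s = h s'" using img by blast
    have "is_lub_in T le' (h ` X) (h s')" unfolding hX using ls s'(2) by simp
    then have "is_lub_in P le X s'" using lub[OF XP s'(1)] by blast
    moreover have "le b s'" using ord[OF b s'(1)] bs s'(2) by blast
    ultimately have "\<exists>c\<in>X. le a c" by (rule wbD[OF W XP dX])
    then obtain c where c: "c \<in> X" "le a c" by blast
    have "c \<in> P" using c XP by blast
    then have "le' (h a) (h c)" using ord[OF a] c by simp
    moreover have "h c \<in> Y" using c hX by blast
    ultimately show "\<exists>c\<in>Y. le' (h a) c" by blast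
  qed
next
  assume W: "way_below_in T le' (h a) (h b)"
  show "way_below_in P le a b"
    unfolding way_below_in_def
  proof (intro allI impI)
    fix X s assume XP: "X \<subseteq> P" and dX: "directed_in le X" and ls: "is_lub_in P le X s"
      and bs: "le b s"
    have sP: "s \<in> P" using ls unfolding is_lub_in_def by blast
    have "h ` X \<subseteq> T" using XP img by blast
    moreover have "directed_in le' (h ` X)" using dir[OF XP] dX by blast
    moreover have "is_lub_in T le' (h ` X) (h s)" using lub[OF XP sP] ls by blast
    moreover have "le' (h b) (h s)" using ord[OF b sP] bs by simp
    ultimately have "\<exists>c\<in>h ` X. le' (h a) c" by (rule wbD[OF W])
    then obtain c where c: "c \<in> h ` X" "le' (h a) c" by blast
    then obtain c' where c': "c' \<in> X" "c = h c'" by blast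
    then have "c' \<in> P" using XP by blast
    then have "le a c'" using ord[OF a] c c' by simp
    then show "\<exists>c\<in>X. le a c" using c' by blast
  qed
qed

end


locale LIA =
  fixes d :: "'a \<Rightarrow> 'l::bounded_lattice_top" and comb :: "'a \<Rightarrow> 'a \<Rightarrow> 'a"
    and marg :: "'a \<Rightarrow> 'l \<Rightarrow> 'a" and e :: "'l \<Rightarrow> 'a"
  assumes L: "labeled_ia d comb marg e"
begin

lemmas Lc = L[unfolded labeled_ia_def]

lemma assoc: "comb (comb a b) c = comb a (comb b c)" using Lc[THEN conjunct1] by blast
lemma com: "comb a b = comb b a" using Lc[THEN conjunct2,THEN conjunct1] by blast
lemma com_left: "comb a (comb b c) = comb b (comb a c)"
  by (simp only: assoc[symmetric] com[of a b])
lemmas ACc = assoc com com_left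
lemma dom_e[simp]: "d (e s) = s" using Lc[THEN conjunct2,THEN conjunct2,THEN conjunct1] by blast
lemma neut: "d \<phi> = s \<Longrightarrow> comb (e s) \<phi> = \<phi>" using Lc[THEN conjunct2,THEN conjunct2,THEN conjunct2,THEN conjunct1] by blast
lemma neut': "d \<phi> = s \<Longrightarrow> comb \<phi> (e s) = \<phi>" using neut[of \<phi> s] com[of \<phi> "e s"] by simp
lemma dom_comb[simp]: "d (comb \<phi> \<psi>) = sup (d \<phi>) (d \<psi>)" using Lc[THEN conjunct2,THEN conjunct2,THEN conjunct2,THEN conjunct2,THEN conjunct1] by blast
lemma dom_marg: "x \<le> d \<phi> \<Longrightarrow> d (marg \<phi> x) = x" using Lc[THEN conjunct2,THEN conjunct2,THEN conjunct2,THEN conjunct2,THEN conjunct2,THEN conjunct1] by blast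
lemma marg_trans: "x \<le> y \<Longrightarrow> y \<le> d \<phi> \<Longrightarrow> marg (marg \<phi> y) x = marg \<phi> x"
  using Lc[THEN conjunct2,THEN conjunct2,THEN conjunct2,THEN conjunct2,THEN conjunct2,THEN conjunct2,THEN conjunct1] by blast
lemma marg_comb: "d \<phi> = x \<Longrightarrow> d \<psi> = y \<Longrightarrow> marg (comb \<phi> \<psi>) x = comb \<phi> (marg \<psi> (inf x y))"
  using Lc[THEN conjunct2,THEN conjunct2,THEN conjunct2,THEN conjunct2,THEN conjunct2,THEN conjunct2,THEN conjunct2,THEN conjunct1] by blast
lemma marg_e: "x \<le> y \<Longrightarrow> marg (e y) x = e x" using Lc[THEN conjunct2,THEN conjunct2,THEN conjunct2,THEN conjunct2,THEN conjunct2,THEN conjunct2,THEN conjunct2,THEN conjunct2,THEN conjunct1] by blast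
lemma idem: "x \<le> d \<phi> \<Longrightarrow> comb \<phi> (marg \<phi> x) = \<phi>" using Lc[THEN conjunct2,THEN conjunct2,THEN conjunct2,THEN conjunct2,THEN conjunct2,THEN conjunct2,THEN conjunct2,THEN conjunct2,THEN conjunct2] by blast

lemma marg_self: "marg \<phi> (d \<phi>) = \<phi>"
proof -
  have "marg (comb \<phi> (e (d \<phi>))) (d \<phi>) = comb \<phi> (marg (e (d \<phi>)) (inf (d \<phi>) (d \<phi>)))"
    by (rule marg_comb) simp_all
  also have "\<dots> = comb \<phi> (e (d \<phi>))" by (simp add: marg_e)
  finally show ?thesis by (simp add: neut')
qed

lemma self_comb: "comb \<phi> \<phi> = \<phi>" using idem[of "d \<phi>" \<phi>] marg_self by simp

lemma e_le: "x \<le> y \<Longrightarrow> comb (e y) (e x) = e y"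
  using idem[of x "e y"] marg_e by simp

lemma e_comb: "comb (e x) (e y) = e (sup x y)"
proof -
  have "comb (e x) (e y) = comb (e (sup x y)) (comb (e x) (e y))" by (simp add: neut)
  also have "\<dots> = comb (comb (e (sup x y)) (e x)) (e y)" by (simp add: assoc)
  also have "\<dots> = comb (e (sup x y)) (e y)" by (simp add: e_le)
  also have "\<dots> = e (sup x y)" by (simp add: e_le)
  finally show ?thesis .
qed

definition up :: "'a \<Rightarrow> 'a" where "up \<phi> = comb \<phi> (e top)"

lemma dom_up[simp]: "d (up \<phi>) = top" unfolding up_def by simp
lemma up_id: "d \<phi> = top \<Longrightarrow> up \<phi> = \<phi>" unfolding up_def by (rule neut')
lemma up_up[simp]: "up (up \<phi>) = up \<phi>" by (simp add: up_id)
lemma up_comb: "up (comb a b) = comb (up a) (up b)"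
proof -
  have "comb (up a) (up b) = comb (comb a b) (comb (e top) (e top))"
    unfolding up_def by (simp only: ACc)
  then show ?thesis unfolding up_def by (simp add: e_comb)
qed
lemma up_ext: "up (comb \<phi> (e z)) = up \<phi>"
  unfolding up_def by (simp add: assoc e_comb)

lemma marg_up: assumes "d \<phi> \<le> z" shows "marg (up \<phi>) z = comb \<phi> (e z)"
proof -
  let ?p = "comb \<phi> (e z)"
  have dp: "d ?p = z" using assms by (simp add: sup_absorb2)
  have "up \<phi> = comb ?p (e top)" using up_ext[of \<phi> z] unfolding up_def by simp
  then have "marg (up \<phi>) z = comb ?p (marg (e top) (inf z top))"
    using marg_comb[OF dp, of "e top" top] by simp
  also have "\<dots> = comb ?p (e z)" by (simp add: marg_e)
  also have "\<dots> = ?p" by (simp add: assoc e_comb)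
  finally show ?thesis .
qed

lemma sigma_iff: "sigma_equiv d comb e \<phi> \<psi> \<longleftrightarrow> up \<phi> = up \<psi>"
proof
  assume "sigma_equiv d comb e \<phi> \<psi>"
  then have "comb \<phi> (e (sup (d \<phi>) (d \<psi>))) = comb \<psi> (e (sup (d \<phi>) (d \<psi>)))"
    unfolding sigma_equiv_def vac_ext_def .
  then show "up \<phi> = up \<psi>" by (metis up_ext)
next
  assume u: "up \<phi> = up \<psi>"
  have "comb \<phi> (e (sup (d \<phi>) (d \<psi>))) = marg (up \<phi>) (sup (d \<phi>) (d \<psi>))"
    by (simp add: marg_up)
  also have "\<dots> = marg (up \<psi>) (sup (d \<phi>) (d \<psi>))" using u by simp
  also have "\<dots> = comb \<psi> (e (sup (d \<phi>) (d \<psi>)))" by (simp add: marg_up)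
  finally show "sigma_equiv d comb e \<phi> \<psi>" unfolding sigma_equiv_def vac_ext_def .
qed

abbreviation cls where "cls \<equiv> sigma_class d comb e"

lemma cls_eq: "cls \<phi> = {\<psi>. up \<psi> = up \<phi>}"
  unfolding sigma_class_def using sigma_iff by auto

lemma cls_eq_iff: "cls \<phi> = cls \<psi> \<longleftrightarrow> up \<phi> = up \<psi>"
  unfolding cls_eq by (auto simp: set_eq_iff)

lemma cls_up: "cls (up \<phi>) = cls \<phi>" using cls_eq_iff by simp

lemma some_cls: "up (SOME \<psi>. \<psi> \<in> cls \<phi>) = up \<phi>"
proof -
  have "\<phi> \<in> cls \<phi>" unfolding cls_eq by simp
  then have "(SOME \<psi>. \<psi> \<in> cls \<phi>) \<in> cls \<phi>" by (rule someI)
  then show ?thesis unfolding cls_eq by simp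
qed

lemma qcomb_cls: "quot_comb d comb e (cls a) (cls b) = cls (comb a b)"
  unfolding quot_comb_def cls_eq_iff up_comb some_cls ..

lemma marg_ext: "marg (comb a (e (sup x (d a)))) x = marg (up a) x"
proof -
  have "marg (up a) x = marg (marg (up a) (sup x (d a))) x"
    by (rule marg_trans[symmetric]) simp_all
  then show ?thesis by (simp add: marg_up)
qed

lemma qfoc_cls: "quot_foc d comb marg e (cls a) x = cls (marg (up a) x)"
  unfolding quot_foc_def Let_def vac_ext_def marg_ext some_cls ..

definition rep where "rep A = up (SOME \<psi>. \<psi> \<in> A)"
lemma rep_cls[simp]: "rep (cls a) = up a" unfolding rep_def some_cls ..

abbreviation "PP \<equiv> quot_carrier d comb e"
abbreviation "TT \<equiv> Phi_at d top"

lemma PP_cases: "A \<in> PP \<Longrightarrow> (\<And>a. A = cls a \<Longrightarrow> thesis) \<Longrightarrow> thesis"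
  unfolding quot_carrier_def by blast

lemma cls_in[simp]: "cls a \<in> PP" unfolding quot_carrier_def by blast

lemma le_trans: "info_le comb a b \<Longrightarrow> info_le comb b c \<Longrightarrow> info_le comb a c"
  unfolding info_le_def by (metis assoc)

lemma le_refl: "info_le comb a a" unfolding info_le_def by (rule self_comb)

lemma qle: "info_le (quot_comb d comb e) (cls a) (cls b) \<longleftrightarrow> info_le comb (up a) (up b)"
  unfolding info_le_def qcomb_cls cls_eq_iff up_comb ..

lemma oiso: "oiso rep PP TT (info_le (quot_comb d comb e)) (info_le comb)"
proof
  show "inj_on rep PP"
  proof
    fix A B assume "A \<in> PP" "B \<in> PP" "rep A = rep B"
    then show "A = B" by (metis PP_cases rep_cls cls_eq_iff)
  qed
  show "rep ` PP = TT"
  proof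
    show "rep ` PP \<subseteq> TT" unfolding Phi_at_def by (auto elim!: PP_cases)
    show "TT \<subseteq> rep ` PP"
    proof
      fix f assume "f \<in> TT"
      then have "f = rep (cls f)" unfolding Phi_at_def by (simp add: up_id)
      then show "f \<in> rep ` PP" by (rule image_eqI[OF _ cls_in])
    qed
  qed
  fix A B assume "A \<in> PP" "B \<in> PP"
  then show "info_le (quot_comb d comb e) A B = info_le comb (rep A) (rep B)"
    by (metis PP_cases rep_cls qle)
qed

end

context LIA begin

abbreviation "qc \<equiv> quot_comb d comb e"
abbreviation "qf \<equiv> quot_foc d comb marg e"
abbreviation "qe \<equiv> quot_neutral d comb e"

lemma qe_cls: "qe = cls (e top)" unfolding quot_neutral_def ..

lemma dom_marg_top: "d (marg (up a) x) = x" by (simp add: dom_marg)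

lemma foc_trans: assumes df: "d f = top"
  shows "up (marg (up (marg f x)) y) = up (marg f (inf x y))"
proof -
  let ?c = "marg f x"
  have dc: "d ?c = x" using df by (simp add: dom_marg)
  have "marg (up ?c) y = marg (marg (up ?c) (sup x y)) y"
    by (rule marg_trans[symmetric]) simp_all
  also have "marg (up ?c) (sup x y) = comb ?c (e (sup x y))" using dc by (simp add: marg_up)
  also have "comb ?c (e (sup x y)) = comb (e y) ?c"
  proof -
    have "comb ?c (e (sup x y)) = comb (comb ?c (e x)) (e y)" by (simp add: assoc e_comb)
    also have "\<dots> = comb ?c (e y)" using neut'[OF dc] by simp
    finally show ?thesis by (simp add: com)
  qed
  also have "marg (comb (e y) ?c) y = comb (e y) (marg ?c (inf y x))"
    by (rule marg_comb) (simp_all add: dc)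
  also have "marg ?c (inf y x) = marg f (inf x y)"
    using marg_trans[of "inf y x" x f] df by (simp add: inf_commute)
  finally have "marg (up ?c) y = comb (e y) (marg f (inf x y))" .
  then have "up (marg (up ?c) y) = comb (marg f (inf x y)) (comb (e y) (e top))"
    unfolding up_def by (simp only: ACc)
  then show ?thesis unfolding up_def by (simp add: e_comb)
qed

lemma q_closed: "A \<in> PP \<Longrightarrow> B \<in> PP \<Longrightarrow> qc A B \<in> PP"
  by (elim PP_cases) (simp add: qcomb_cls)
lemma qf_closed: "A \<in> PP \<Longrightarrow> qf A x \<in> PP"
  by (elim PP_cases) (simp add: qfoc_cls)
lemma q_assoc: "A \<in> PP \<Longrightarrow> B \<in> PP \<Longrightarrow> C \<in> PP \<Longrightarrow> qc (qc A B) C = qc A (qc B C)"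
  by (elim PP_cases) (simp add: qcomb_cls assoc)
lemma q_com: "A \<in> PP \<Longrightarrow> B \<in> PP \<Longrightarrow> qc A B = qc B A"
  by (elim PP_cases) (simp add: qcomb_cls com)
lemma q_neut: "A \<in> PP \<Longrightarrow> qc qe A = A"
proof (elim PP_cases)
  fix a assume A: "A = cls a"
  have "up (comb (e top) a) = up a"
    unfolding up_comb using up_id[of "e top"] neut[of "up a" top] by simp
  then show "qc qe A = A" unfolding A qe_cls qcomb_cls cls_eq_iff .
qed
lemma q_trans: "A \<in> PP \<Longrightarrow> qf (qf A x) y = qf A (inf x y)"
proof (elim PP_cases)
  fix a assume A: "A = cls a"
  show "qf (qf A x) y = qf A (inf x y)"
    unfolding A qfoc_cls cls_eq_iff by (rule foc_trans) simp
qed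
lemma q_combax: "A \<in> PP \<Longrightarrow> B \<in> PP \<Longrightarrow> qf (qc (qf A x) B) x = qc (qf A x) (qf B x)"
proof (elim PP_cases)
  fix a b assume A: "A = cls a" and B: "B = cls b"
  let ?m = "marg (up a) x"
  have dm: "d ?m = x" by (rule dom_marg_top)
  have "up (comb ?m b) = comb ?m (up b)" unfolding up_def by (simp add: assoc)
  then have "marg (up (comb ?m b)) x = comb ?m (marg (up b) (inf x top))"
    using marg_comb[OF dm, of "up b" top] by simp
  then show "qf (qc (qf A x) B) x = qc (qf A x) (qf B x)"
    unfolding A B qfoc_cls qcomb_cls by simp
qed
lemma q_support: "A \<in> PP \<Longrightarrow> \<exists>x. qf A x = A"
proof (elim PP_cases)
  fix a assume A: "A = cls a"
  have "marg (up a) top = up a" using marg_self[of "up a"] by simp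
  then have "qf A top = A" unfolding A qfoc_cls by (simp add: cls_up)
  then show "\<exists>x. qf A x = A" by blast
qed
lemma q_idem: "A \<in> PP \<Longrightarrow> qc A (qf A x) = A"
proof (elim PP_cases)
  fix a assume A: "A = cls a"
  let ?m = "marg (up a) x"
  have "up (comb a ?m) = comb (comb (up a) ?m) (e top)"
    unfolding up_comb by (simp add: up_def assoc)
  also have "\<dots> = comb (up a) (e top)" using idem[of x "up a"] by simp
  also have "\<dots> = up a" using neut'[of "up a" top] by simp
  finally show "qc A (qf A x) = A" unfolding A qfoc_cls qcomb_cls cls_eq_iff .
qed

lemma df_ia_q: "df_ia PP qc qe qf"
  unfolding df_ia_def
  apply (intro conjI ballI allI)
  apply (erule (1) q_closed)
  apply (simp add: qe_cls)
  apply (erule qf_closed)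
  apply (erule (2) q_assoc)
  apply (erule (1) q_com)
  apply (erule q_neut)
  apply (erule q_trans)
  apply (erule (1) q_combax)
  apply (erule q_support)
  apply (erule q_idem)
  done

lemma wb_le: assumes "b \<in> A" "way_below_in A (info_le comb) a b" shows "info_le comb a b"
proof -
  have "directed_in (info_le comb) {b}" unfolding directed_in_def using le_refl by blast
  moreover have "is_lub_in A (info_le comb) {b} b" unfolding is_lub_in_def using assms(1) le_refl by blast
  ultimately have "\<exists>c\<in>{b}. info_le comb a c"
    using wbD[OF assms(2), of "{b}" b] assms(1) le_refl by blast
  then show ?thesis by simp
qed

lemma wb_mono: assumes "way_below_in A (info_le comb) a a" "info_le comb a b"
  shows "way_below_in A (info_le comb) a b"
  unfolding way_below_in_def
proof (intro allI impI)
  fix X s assume H: "X \<subseteq> A" "directed_in (info_le comb) X" "is_lub_in A (info_le comb) X s"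
    "info_le comb b s"
  have "info_le comb a s" using assms(2) H(4) by (rule le_trans)
  then show "\<exists>c\<in>X. info_le comb a c" by (rule wbD[OF assms(1) H(1-3)])
qed

lemma le_up: assumes dm: "d m = x" and df: "d f = top"
  shows "info_le comb (up m) f \<longleftrightarrow> info_le comb m (marg f x)"
proof
  assume "info_le comb (up m) f"
  then have "comb m (comb (e top) f) = f" unfolding info_le_def up_def by (simp add: assoc)
  then have mf: "comb m f = f" using neut[OF df] by simp
  have "marg f x = marg (comb m f) x" using mf by simp
  also have "\<dots> = comb m (marg f (inf x top))" by (rule marg_comb[OF dm df])
  finally show "info_le comb m (marg f x)" unfolding info_le_def by simp
next
  assume "info_le comb m (marg f x)"
  then have mm: "comb m (marg f x) = marg f x" unfolding info_le_def .
  have "comb (up m) f = comb m (comb (e top) f)" unfolding up_def by (simp add: assoc)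
  also have "\<dots> = comb m f" using neut[OF df] by simp
  also have "\<dots> = comb m (comb f (marg f x))" using idem[of x f] df by simp
  also have "\<dots> = comb f (comb m (marg f x))" by (rule com_left)
  also have "\<dots> = f" using mm idem[of x f] df by simp
  finally show "info_le comb (up m) f" unfolding info_le_def .
qed

lemma up_mono: "info_le comb m m' \<Longrightarrow> info_le comb (up m) (up m')"
  unfolding info_le_def by (metis up_comb)

end

context LIA begin

abbreviation "GG \<equiv> cls ` Phi_f d comb top"
abbreviation "qle \<equiv> info_le qc"
abbreviation "le \<equiv> info_le comb"

lemma Phi_f_top: "g \<in> Phi_f d comb top \<Longrightarrow> d g = top"
  unfolding Phi_f_def Phi_at_def by simp

lemma rep_GG: "rep ` GG = Phi_f d comb top"
proof -
  have "rep ` GG = up ` Phi_f d comb top" by (simp add: image_image)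
  also have "\<dots> = Phi_f d comb top"
  proof -
    have "\<And>g. g \<in> Phi_f d comb top \<Longrightarrow> up g = g" using up_id Phi_f_top by blast
    then show ?thesis by (simp cong: image_cong)
  qed
  finally show ?thesis .
qed

lemma GG_sub: "GG \<subseteq> PP" by auto

lemma base_q:
  assumes B: "labeled_compact_base d comb marg e (Phi_f d comb)"
  shows "df_compact_base PP qc qe qf GG"
proof -
  interpret O: oiso rep PP TT qle le by (rule oiso)
  have B1: "\<forall>x. Phi_f d comb x \<subseteq> Phi_at d x \<and> e x \<in> Phi_f d comb x \<and>
          (\<forall>\<phi>\<in>Phi_f d comb x. \<forall>\<psi>\<in>Phi_f d comb x. comb \<phi> \<psi> \<in> Phi_f d comb x)"
    using B unfolding labeled_compact_base_def by (rule conjunct1[OF conjunct2])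
  have B2: "\<forall>x X. X \<subseteq> Phi_f d comb x \<longrightarrow> directed_in le X \<longrightarrow>
          (\<exists>s. is_lub_in (Phi_at d x) le X s)"
    using B unfolding labeled_compact_base_def by (rule conjunct1[OF conjunct2[OF conjunct2]])
  have B3: "\<forall>x X \<phi>. X \<subseteq> Phi_f d comb x \<longrightarrow> directed_in le X \<longrightarrow> \<phi> \<in> Phi_f d comb x \<longrightarrow>
          (\<exists>s. is_lub_in (Phi_at d x) le X s \<and> le \<phi> s) \<longrightarrow>
          (\<exists>\<psi>\<in>X. le \<phi> \<psi>)"
    using B unfolding labeled_compact_base_def by (rule conjunct2[OF conjunct2[OF conjunct2]])
  have B1t: "Phi_f d comb top \<subseteq> Phi_at d top \<and> e top \<in> Phi_f d comb top \<and>
          (\<forall>\<phi>\<in>Phi_f d comb top. \<forall>\<psi>\<in>Phi_f d comb top. comb \<phi> \<psi> \<in> Phi_f d comb top)"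
    using B1 by (rule spec)
  have "e top \<in> Phi_f d comb top" using B1t by (rule conjunct1[OF conjunct2])
  then have "qe \<in> GG" unfolding qe_cls by (rule imageI)
  moreover have "\<forall>a\<in>GG. \<forall>b\<in>GG. qc a b \<in> GG"
  proof (intro ballI)
    fix A B assume "A \<in> GG" "B \<in> GG"
    then obtain a b where ab: "a \<in> Phi_f d comb top" "b \<in> Phi_f d comb top" "A = cls a" "B = cls b"
      by blast
    have "\<forall>\<phi>\<in>Phi_f d comb top. \<forall>\<psi>\<in>Phi_f d comb top. comb \<phi> \<psi> \<in> Phi_f d comb top"
      using B1t by (rule conjunct2[OF conjunct2])
    then have "comb a b \<in> Phi_f d comb top" using ab(1,2) by blast
    then show "qc A B \<in> GG" unfolding ab qcomb_cls by (rule imageI)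
  qed
  moreover have "\<forall>X. X \<subseteq> GG \<longrightarrow> directed_in qle X \<longrightarrow> (\<exists>s. is_lub_in PP qle X s)"
  proof (intro allI impI)
    fix X assume X: "X \<subseteq> GG" and dX: "directed_in qle X"
    have XP: "X \<subseteq> PP" using X GG_sub by (rule subset_trans)
    have "rep ` X \<subseteq> rep ` GG" by (rule image_mono[OF X])
    then have "rep ` X \<subseteq> Phi_f d comb top" by (simp only: rep_GG)
    moreover have "directed_in le (rep ` X)" using O.dir[OF XP, THEN iffD1, OF dX] .
    ultimately have "\<exists>s. is_lub_in TT le (rep ` X) s" by (rule B2[rule_format])
    then show "\<exists>s. is_lub_in PP qle X s" by (rule O.lub_ex[OF XP, THEN iffD2])
  qed
  moreover have "\<forall>X \<phi>. X \<subseteq> GG \<longrightarrow> directed_in qle X \<longrightarrow> \<phi> \<in> GG \<longrightarrow>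
          (\<exists>s. is_lub_in PP qle X s \<and> qle \<phi> s) \<longrightarrow> (\<exists>\<psi>\<in>X. qle \<phi> \<psi>)"
  proof (intro allI impI)
    fix X \<phi> assume X: "X \<subseteq> GG" and dX: "directed_in qle X" and ph: "\<phi> \<in> GG"
      and ex: "\<exists>s. is_lub_in PP qle X s \<and> qle \<phi> s"
    have XP: "X \<subseteq> PP" using X GG_sub by (rule subset_trans)
    have phP: "\<phi> \<in> PP" using ph GG_sub by (rule subsetD[rotated])
    obtain s where s: "is_lub_in PP qle X s" "qle \<phi> s" using ex by blast
    have sP: "s \<in> PP" using s(1) unfolding is_lub_in_def by blast
    have "rep ` X \<subseteq> rep ` GG" by (rule image_mono[OF X])
    then have f1: "rep ` X \<subseteq> Phi_f d comb top" by (simp only: rep_GG)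
    have f2: "directed_in le (rep ` X)" using O.dir[OF XP, THEN iffD1, OF dX] .
    have "rep \<phi> \<in> rep ` GG" using ph by (rule imageI)
    then have f3: "rep \<phi> \<in> Phi_f d comb top" by (simp only: rep_GG)
    have "is_lub_in TT le (rep ` X) (rep s) \<and> le (rep \<phi>) (rep s)"
      using O.lub[OF XP sP, THEN iffD1, OF s(1)] O.ord[OF phP sP, THEN iffD1, OF s(2)] by (rule conjI)
    then have f4: "\<exists>s. is_lub_in TT le (rep ` X) s \<and> le (rep \<phi>) s" by (rule exI)
    have "\<exists>\<psi>\<in>rep ` X. le (rep \<phi>) \<psi>" by (rule B3[rule_format, OF f1 f2 f3 f4])
    then obtain \<psi> where "\<psi> \<in> X" "le (rep \<phi>) (rep \<psi>)" by blast
    moreover have "\<psi> \<in> PP" using \<open>\<psi> \<in> X\<close> XP by blast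
    ultimately have "qle \<phi> \<psi>" using O.ord[OF phP, THEN iffD2] by blast
    then show "\<exists>\<psi>\<in>X. qle \<phi> \<psi>" using \<open>\<psi> \<in> X\<close> by blast
  qed
  ultimately have F: "qe \<in> GG \<and> (\<forall>a\<in>GG. \<forall>b\<in>GG. qc a b \<in> GG) \<and>
     (\<forall>X. X \<subseteq> GG \<longrightarrow> directed_in qle X \<longrightarrow> (\<exists>s. is_lub_in PP qle X s)) \<and>
     (\<forall>X \<phi>. X \<subseteq> GG \<longrightarrow> directed_in qle X \<longrightarrow> \<phi> \<in> GG \<longrightarrow>
          (\<exists>s. is_lub_in PP qle X s \<and> qle \<phi> s) \<longrightarrow> (\<exists>\<psi>\<in>X. qle \<phi> \<psi>))"
    by (intro conjI)
  show ?thesis unfolding df_compact_base_def using GG_sub F by (rule conjI)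
qed

lemma dens_q:
  assumes D: "\<forall>\<phi>\<in>TT. is_lub_in TT le {\<psi>\<in>Phi_f d comb top. way_below_in TT le \<psi> \<phi>} \<phi>"
  shows "\<forall>A\<in>PP. is_lub_in PP qle {\<psi>\<in>GG. way_below_in PP qle \<psi> A} A"
proof
  interpret O: oiso rep PP TT qle le by (rule oiso)
  fix A assume AP: "A \<in> PP"
  let ?S = "{\<psi>\<in>GG. way_below_in PP qle \<psi> A}"
  have SP: "?S \<subseteq> PP" by auto
  have EQ: "rep ` ?S = {\<psi>\<in>Phi_f d comb top. way_below_in TT le \<psi> (rep A)}"
  proof
    show "rep ` ?S \<subseteq> {\<psi>\<in>Phi_f d comb top. way_below_in TT le \<psi> (rep A)}"
    proof
      fix y assume "y \<in> rep ` ?S"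
      then obtain \<psi> where p: "\<psi> \<in> GG" "way_below_in PP qle \<psi> A" "y = rep \<psi>" by blast
      have "\<psi> \<in> PP" using p(1) by auto
      then have "way_below_in TT le (rep \<psi>) (rep A)" using O.wb[OF _ AP, THEN iffD1] p(2) by blast
      moreover have "rep \<psi> \<in> Phi_f d comb top" using p(1) rep_GG by blast
      ultimately show "y \<in> {\<psi>\<in>Phi_f d comb top. way_below_in TT le \<psi> (rep A)}" using p(3) by blast
    qed
    show "{\<psi>\<in>Phi_f d comb top. way_below_in TT le \<psi> (rep A)} \<subseteq> rep ` ?S"
    proof
      fix g assume g: "g \<in> {\<psi>\<in>Phi_f d comb top. way_below_in TT le \<psi> (rep A)}"
      then have gt: "g \<in> Phi_f d comb top" and w: "way_below_in TT le g (rep A)" by auto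
      have rg: "rep (cls g) = g" using up_id Phi_f_top[OF gt] by simp
      then have "way_below_in TT le (rep (cls g)) (rep A)" using w by simp
      then have W2: "way_below_in PP qle (cls g) A" by (rule O.wb[OF cls_in AP, THEN iffD2])
      have "cls g \<in> ?S" using imageI[OF gt, of cls] W2 by (intro CollectI conjI)
      then have "rep (cls g) \<in> rep ` ?S" by (rule imageI)
      then show "g \<in> rep ` ?S" unfolding rg .
    qed
  qed
  have "rep A \<in> TT" using AP O.img by blast
  then have "is_lub_in TT le {\<psi>\<in>Phi_f d comb top. way_below_in TT le \<psi> (rep A)} (rep A)"
    by (rule D[rule_format])
  then have "is_lub_in TT le (rep ` ?S) (rep A)" unfolding EQ .
  then show "is_lub_in PP qle ?S A" using O.lub[OF SP AP, THEN iffD2] by blast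
qed


lemma sdens_q:
  assumes S: "\<forall>x. \<forall>\<phi>\<in>Phi_at d x. is_lub_in (Phi_at d x) le
          {marg \<psi> x | \<psi>. x \<le> d \<psi> \<and> marg \<psi> x \<in> Phi_f d comb x \<and>
               comb (marg \<psi> x) (e top) \<in> Phi_f d comb top \<and>
               way_below_in (Phi_at d x) le (marg \<psi> x) \<phi>} \<phi>"
  shows "\<forall>A\<in>PP. \<forall>x. is_lub_in PP qle {\<psi>\<in>GG. qf \<psi> x = \<psi> \<and> way_below_in PP qle \<psi> A} (qf A x)"
proof (intro ballI allI)
  interpret O: oiso rep PP TT qle le by (rule oiso)
  fix A x assume AP: "A \<in> PP"
  then obtain a where A: "A = cls a" by (rule PP_cases)
  let ?f = "up a"
  have repA: "rep A = ?f" unfolding A by simp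
  have fT: "?f \<in> TT" unfolding Phi_at_def by simp
  have df: "d ?f = top" by simp
  let ?S = "{\<psi>\<in>GG. qf \<psi> x = \<psi> \<and> way_below_in PP qle \<psi> A}"
  have SP: "?S \<subseteq> PP" by auto
  have qfA: "qf A x = cls (marg ?f x)" unfolding A qfoc_cls ..
  have qfP: "qf A x \<in> PP" unfolding qfA by simp
  let ?p = "marg ?f x"
  have dp: "d ?p = x" by (rule dom_marg_top)
  have pX: "?p \<in> Phi_at d x" unfolding Phi_at_def using dp by simp
  have "is_lub_in TT le (rep ` ?S) (up ?p)"
    unfolding is_lub_in_def
  proof (intro conjI ballI impI)
    show "up ?p \<in> TT" unfolding Phi_at_def by simp
  next
    fix y assume "y \<in> rep ` ?S"
    then obtain \<psi> where ps: "\<psi> \<in> GG" "qf \<psi> x = \<psi>" "way_below_in PP qle \<psi> A" "y = rep \<psi>"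
      by blast
    then obtain g where g: "g \<in> Phi_f d comb top" "\<psi> = cls g" by blast
    have ug: "up g = g" using up_id Phi_f_top[OF g(1)] by simp
    have y: "y = g" using ps(4) g(2) ug by simp
    have "cls (marg g x) = cls g" using ps(2) unfolding g(2) qfoc_cls ug .
    then have gm: "up (marg g x) = g" using cls_eq_iff ug by simp
    have psP: "\<psi> \<in> PP" using ps(1) by auto
    have "way_below_in TT le (rep \<psi>) (rep A)"
      using O.wb[OF psP AP, THEN iffD1] ps(3) by blast
    then have "way_below_in TT le g ?f" using g(2) ug repA by simp
    then have gf: "le g ?f" using wb_le[OF fT] by blast
    have dmg: "d (marg g x) = x" using Phi_f_top[OF g(1)] by (simp add: dom_marg)
    have "le (up (marg g x)) ?f" using gf gm by simp
    then have "le (marg g x) ?p" using le_up[OF dmg df] by blast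
    then have "le (up (marg g x)) (up ?p)" by (rule up_mono)
    then show "le y (up ?p)" using gm y by simp
  next
    fix u assume uT: "u \<in> TT" and ub: "\<forall>y\<in>rep ` ?S. le y u"
    have du: "d u = top" using uT unfolding Phi_at_def by simp
    let ?L = "{marg \<psi> x | \<psi>. x \<le> d \<psi> \<and> marg \<psi> x \<in> Phi_f d comb x \<and>
               comb (marg \<psi> x) (e top) \<in> Phi_f d comb top \<and>
               way_below_in (Phi_at d x) le (marg \<psi> x) ?p}"
    have lubL: "is_lub_in (Phi_at d x) le ?L ?p" using S[rule_format, OF pX] .
    have muX: "marg u x \<in> Phi_at d x" unfolding Phi_at_def using du by (simp add: dom_marg)
    have UB: "\<forall>\<chi>\<in>?L. le \<chi> (marg u x)"
    proof
      fix \<chi> assume "\<chi> \<in> ?L"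
      then obtain \<psi> where ch: "\<chi> = marg \<psi> x" "x \<le> d \<psi>"
          "comb \<chi> (e top) \<in> Phi_f d comb top" "way_below_in (Phi_at d x) le \<chi> ?p"
        by blast
      have dch: "d \<chi> = x" using ch(1,2) by (simp add: dom_marg)
      let ?g = "up \<chi>"
      have gG: "?g \<in> Phi_f d comb top" using ch(3) unfolding up_def .
      have "le \<chi> ?p" using wb_le[OF pX ch(4)] .
      then have "le ?g (up ?p)" by (rule up_mono)
      moreover have "le (up ?p) ?f" using le_up[OF dp df] le_refl by blast
      ultimately have gf: "le ?g ?f" by (rule le_trans)
      have "way_below_in TT le ?g ?g" using gG unfolding Phi_f_def by blast
      then have "way_below_in TT le ?g ?f" using gf by (rule wb_mono)
      then have "way_below_in TT le (rep (cls ?g)) (rep A)" using repA by simp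
      then have w: "way_below_in PP qle (cls ?g) A" using O.wb[OF cls_in AP, THEN iffD2] by blast
      have "marg (up ?g) x = \<chi>" using marg_up[of \<chi> x] dch neut'[OF dch] by simp
      then have "qf (cls ?g) x = cls ?g" unfolding qfoc_cls by (simp add: cls_up)
      then have "cls ?g \<in> ?S" using imageI[OF gG, of cls] w by (intro CollectI conjI)
      then have "rep (cls ?g) \<in> rep ` ?S" by (rule imageI)
      then have "le (rep (cls ?g)) u" by (rule bspec[OF ub])
      then have "le ?g u" by simp
      then show "le \<chi> (marg u x)" using le_up[OF dch du] by blast
    qed
    from lubL have LE: "\<forall>v\<in>Phi_at d x. (\<forall>w\<in>?L. le w v) \<longrightarrow> le ?p v"
      unfolding is_lub_in_def by (rule conjunct2[OF conjunct2])
    have "le ?p (marg u x)" using bspec[OF LE muX] UB by (rule mp)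
    then have "le (up ?p) (up (marg u x))" by (rule up_mono)
    moreover have "le (up (marg u x)) u" using le_up[OF _ du, of "marg u x" x] du le_refl
      by (simp add: dom_marg)
    ultimately show "le (up ?p) u" by (rule le_trans)
  qed
  then have "is_lub_in TT le (rep ` ?S) (rep (qf A x))" unfolding qfA by simp
  then show "is_lub_in PP qle ?S (qf A x)" using O.lub[OF SP qfP, THEN iffD2] by blast
qed

end

lemma lia_of_base: "labeled_compact_base d comb marg e G \<Longrightarrow> LIA d comb marg e"
  unfolding labeled_compact_base_def by (unfold_locales) (rule conjunct1)

theorem theorem4p11:
  fixes d :: "'a \<Rightarrow> 'l::bounded_lattice_top"
    and comb :: "'a \<Rightarrow> 'a \<Rightarrow> 'a"
    and marg :: "'a \<Rightarrow> 'l \<Rightarrow> 'a"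
    and e :: "'l \<Rightarrow> 'a"
  shows "(labeled_compact d comb marg e (Phi_f d comb) \<longrightarrow>
           df_compact (quot_carrier d comb e) (quot_comb d comb e) (quot_neutral d comb e)
             (quot_foc d comb marg e))
       \<and> (labeled_scompact d comb marg e (Phi_f d comb) \<longrightarrow>
           df_scompact (quot_carrier d comb e) (quot_comb d comb e) (quot_neutral d comb e)
             (quot_foc d comb marg e))"
proof (intro conjI impI)
  assume H: "labeled_compact d comb marg e (Phi_f d comb)"
  note HH = H[unfolded labeled_compact_def]
  note B = HH[THEN conjunct1]
  note D = HH[THEN conjunct2]
  interpret LIA d comb marg e by (rule lia_of_base[OF B])
  have "df_compact_base PP qc qe qf GG" by (rule base_q[OF B])
  moreover have "\<forall>A\<in>PP. is_lub_in PP qle {\<psi>\<in>GG. way_below_in PP qle \<psi> A} A"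
  proof (rule dens_q, rule ballI)
    fix \<phi> assume "\<phi> \<in> TT"
    then show "is_lub_in TT le {\<psi> \<in> Phi_f d comb top. way_below_in TT le \<psi> \<phi>} \<phi>"
      by (rule D[rule_format])
  qed
  ultimately have "df_compact_base PP qc qe qf GG \<and>
        (\<forall>A\<in>PP. is_lub_in PP qle {\<psi>\<in>GG. way_below_in PP qle \<psi> A} A)"
    by (rule conjI)
  then have "\<exists>G. df_compact_base PP qc qe qf G \<and>
        (\<forall>A\<in>PP. is_lub_in PP qle {\<psi>\<in>G. way_below_in PP qle \<psi> A} A)"
    by (rule exI[of _ GG])
  with df_ia_q show "df_compact PP qc qe qf" unfolding df_compact_def by (rule conjI)
next
  assume H: "labeled_scompact d comb marg e (Phi_f d comb)"
  note HH = H[unfolded labeled_scompact_def]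
  note B = HH[THEN conjunct1]
  note S = HH[THEN conjunct2]
  interpret LIA d comb marg e by (rule lia_of_base[OF B])
  have "df_compact_base PP qc qe qf GG" by (rule base_q[OF B])
  moreover have "\<forall>A\<in>PP. \<forall>x. is_lub_in PP qle {\<psi>\<in>GG. qf \<psi> x = \<psi> \<and> way_below_in PP qle \<psi> A} (qf A x)"
    by (rule sdens_q[OF S])
  ultimately have "df_compact_base PP qc qe qf GG \<and>
        (\<forall>A\<in>PP. \<forall>x. is_lub_in PP qle {\<psi>\<in>GG. qf \<psi> x = \<psi> \<and> way_below_in PP qle \<psi> A} (qf A x))"
    by (rule conjI)
  then have "\<exists>G. df_compact_base PP qc qe qf G \<and>
        (\<forall>A\<in>PP. \<forall>x. is_lub_in PP qle {\<psi>\<in>G. qf \<psi> x = \<psi> \<and> way_below_in PP qle \<psi> A} (qf A x))"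
    by (rule exI[of _ GG])
  with df_ia_q show "df_scompact PP qc qe qf" unfolding df_scompact_def by (rule conjI)
qed

end
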